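(* Let $\rho\colon\mathcal{F}\to[\Lambda]^\omega$ with $\mathcal{F}\subseteq[\Omega]^\omega$ be a partition regular function. (1) If $\rho_{\mathsf{BI}}\leq_K\rho$, then $\rho\notin P^-_2(\Lambda)$. If moreover $\rho\in(S_1)$, then $\rho_{\mathsf{BI}}\leq_K\rho$ if and only if $\rho\notin P^-_2(\Lambda)$. (2) If $\omega^2+1\in\mathrm{FinBW}(\rho)$, then $\rho\in P^-_2(\Lambda)$. If moreover $\rho\in(S_2)$, then $\rho\in P^-_2(\Lambda)$ if and only if $\omega^2+1\in\mathrm{FinBW}(\rho)$, where the ordinal $\omega^2+1$ carries the order topology.
   Context: All topological spaces are Hausdorff. An ideal on a nonempty set $X$ is a family $\mathcal{I}\subseteq\mathcal{P}(X)$ with $\emptyset\in\mathcal{I}$, $X\notin\mathcal{I}$, closed under finite unions and subsets, containing all finite subsets; $\mathcal{I}^+=\mathcal{P}(X)\setminus\mathcal{I}$. Partition regular function: $\Lambda,\Omega$ countably infinite, $\mathcal{F}$ a nonempty family of infinite subsets of $\Omega$ with $F\setminus K\in\mathcal{F}$ for $F\in\mathcal{F}$, $K$ finite; $\rho\colon\mathcal{F}\to[\Lambda]^\omega$ is partition regular if (M) $E\subseteq F\Rightarrow\rho(E)\subseteq\rho(F)$; (R) if $F\in\mathcal{F}$ and $\rho(F)=A\cup B$ then some $E\in\mathcal{F}$ has $\rho(E)\subseteq A$ or $\rho(E)\subseteq B$; (S) for every $E\in\mathcal{F}$ there is $F\in\mathcal{F}$, $F\subseteq E$, such that every $a\in\rho(F)$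 satisfies $a\notin\rho(F\setminus K)$ for some finite $K\subseteq\Omega$. $\mathcal{I}_\rho=\{A\subseteq\Lambda:\forall F\in\mathcal{F}\ \rho(F)\not\subseteq A\}$. For an ideal $\mathcal{I}$ on a countable set $\Lambda$, $\rho_{\mathcal{I}}\colon\mathcal{I}^+\to[\Lambda]^\omega$, $\rho_{\mathcal{I}}(A)=A$ (with $\Omega=\Lambda$). $\rho$-convergence and $\mathrm{FinBW}(\rho)$: for $f\colon\Lambda\to X$ and $F\in\mathcal{F}$, $f\restriction\rho(F)$ $\rho$-converges to $x$ if for every neighborhood $U$ of $x$ there is a finite $K\subseteq\Omega$ with $f[\rho(F\setminus K)]\subseteq U$; $\mathrm{FinBW}(\rho)$ is the class of spaces $X$ such that for every $f\colon\Lambda\to X$ some $F\in\mathcal{F}$ makes $f\restriction\rho(F)$ $\rho$-convergent to some point of $X$. Katětov order: $\rho_2\leq_K\rho_1$ (for $\rho_i\colon\mathcal{F}_i\to[\Lambda_i]^\omega$, $\mathcal{F}_i\subseteq[\Omega_i]^\omega$) if there is $f\colon\Lambda_1\to\Lambda_2$ such that for every $F_1\in\mathcal{F}_1$ there is $F_2\in\mathcal{F}_2$ such that for every finite $K_1\subseteq\Omega_1$ there is a finite $K_2\subseteq\Omega_2$ with $\rho_2(F_2\setminus K_2)\subseteq f[\rho_1(F_1\setminus K_1)]$. $\mathrm{FIN}^2$ on $\omega^2$: $A\in\mathrm{FIN}^2$ iff there is $i_0$ with $\{j:(i,j)\in A\}$ finite for all $i\ge i_0$. $\mathsf{BI}$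 is the ideal on $\omega^3$: $A\in\mathsf{BI}$ iff there is $i_0$ such that $\{(j,k):(i,j,k)\in A\}\in\mathrm{FIN}^2$ for all $i<i_0$ and $\{(j,k):(i,j,k)\in A\}$ is finite for all $i\geq i_0$. $\rho\in P^-_2(\Lambda)$ means: for every partition $\{A_{i,j}:i,j\in\omega\}$ of $\Lambda$ with all $A_{i,j}\in\mathcal{I}_\rho$ there is $F\in\mathcal{F}$ such that (a) for all $i,j$ there is a finite $K\subseteq\Omega$ with $\rho(F\setminus K)\cap A_{i,j}=\emptyset$, and (b) there is $i_0$ such that for all $i>i_0$ there is a finite $K\subseteq\Omega$ with $\rho(F\setminus K)\cap\bigcup_{j}A_{i,j}=\emptyset$. $\rho\in(S_1)$: for every $E\in\mathcal{F}$ there is $F\in\mathcal{F}$, $F\subseteq E$, such that for every $A\in\mathcal{I}_\rho$ there is $G\in\mathcal{F}$ with $\rho(G)\subseteq\rho(F)\setminus A$ and for every finite $K$ there is a finite $L$ with $\rho(G\setminus L)\subseteq\rho(F\setminus K)$. $\rho\in(S_2)$: for every $E\in\mathcal{F}$ there is $F\in\mathcal{F}$, $F\subseteq E$, such that for every $B\subseteq\rho(F)$ with $B\notin\mathcal{I}_\rho$ there is $G\in\mathcal{F}$ with $\rho(G)\subseteq B$ and for every finite $K$ there is a finite $L$ with $\rho(G\setminus L)\subseteq\rho(F\setminus K)$. *)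

theory Defs
  imports "HOL-Analysis.Analysis"
begin

text \<open>Lambda and Omega are the (countably infinite) universes of the type variables 'l and 'o.
  Fam is the family F of (infinite) subsets of Omega, rho is the function F -> [Lambda]^omega.
  Values of rho outside Fam are irrelevant.\<close>

definition partition_regular :: "'o set set \<Rightarrow> ('o set \<Rightarrow> 'l set) \<Rightarrow> bool" where
  "partition_regular Fam rho \<longleftrightarrow>
     Fam \<noteq> {} \<and>
     (\<forall>F\<in>Fam. infinite F) \<and>
     (\<forall>F\<in>Fam. \<forall>K. finite K \<longrightarrow> F - K \<in> Fam) \<and>
     (\<forall>F\<in>Fam. infinite (rho F)) \<and>
     \<comment> \<open>(M)\<close>
     (\<forall>E\<in>Fam. \<forall>F\<in>Fam. E \<subseteq> F \<longrightarrow> rho E \<subseteq> rho F) \<and>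
     \<comment> \<open>(R)\<close>
     (\<forall>F\<in>Fam. \<forall>A B. rho F = A \<union> B \<longrightarrow> (\<exists>E\<in>Fam. rho E \<subseteq> A \<or> rho E \<subseteq> B)) \<and>
     \<comment> \<open>(S)\<close>
     (\<forall>E\<in>Fam. \<exists>F\<in>Fam. F \<subseteq> E \<and>
        (\<forall>a\<in>rho F. \<exists>K. finite K \<and> a \<notin> rho (F - K)))"

definition I_rho :: "'o set set \<Rightarrow> ('o set \<Rightarrow> 'l set) \<Rightarrow> 'l set set" where
  "I_rho Fam rho = {A. \<forall>F\<in>Fam. \<not> rho F \<subseteq> A}"

text \<open>katetov_le Fam2 rho2 Fam1 rho1 means rho2 \<le>_K rho1.\<close>

definition katetov_le ::
  "'o2 set set \<Rightarrow> ('o2 set \<Rightarrow> 'l2 set) \<Rightarrow> 'o1 set set \<Rightarrow> ('o1 set \<Rightarrow> 'l1 set) \<Rightarrow> bool" where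
  "katetov_le Fam2 rho2 Fam1 rho1 \<longleftrightarrow>
     (\<exists>f :: 'l1 \<Rightarrow> 'l2. \<forall>F1\<in>Fam1. \<exists>F2\<in>Fam2. \<forall>K1. finite K1 \<longrightarrow>
        (\<exists>K2. finite K2 \<and> rho2 (F2 - K2) \<subseteq> f ` rho1 (F1 - K1)))"

definition FIN2 :: "(nat \<times> nat) set set" where
  "FIN2 = {A. \<exists>i0. \<forall>i\<ge>i0. finite {j. (i, j) \<in> A}}"

definition BI :: "(nat \<times> nat \<times> nat) set set" where
  "BI = {A. \<exists>i0. (\<forall>i<i0. {(j, k). (i, j, k) \<in> A} \<in> FIN2) \<and>
                 (\<forall>i\<ge>i0. finite {(j, k). (i, j, k) \<in> A})}"

text \<open>rho_I for an ideal I on a countable set: domain I^+, identity map.\<close>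

definition ideal_plus :: "'a set set \<Rightarrow> 'a set set" where
  "ideal_plus I = {A. A \<notin> I}"

definition rho_ideal :: "'a set \<Rightarrow> 'a set" where
  "rho_ideal A = A"

definition P2_minus :: "'o set set \<Rightarrow> ('o set \<Rightarrow> 'l set) \<Rightarrow> bool" where
  "P2_minus Fam rho \<longleftrightarrow>
     (\<forall>A :: nat \<Rightarrow> nat \<Rightarrow> 'l set.
        ((\<forall>i j i' j'. (i, j) \<noteq> (i', j') \<longrightarrow> A i j \<inter> A i' j' = {}) \<and>
         (\<Union>i. \<Union>j. A i j) = UNIV \<and>
         (\<forall>i j. A i j \<in> I_rho Fam rho))
        \<longrightarrow> (\<exists>F\<in>Fam.
               (\<forall>i j. \<exists>K. finite K \<and> rho (F - K) \<inter> A i j = {}) \<and>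
               (\<exists>i0. \<forall>i>i0. \<exists>K. finite K \<and> rho (F - K) \<inter> (\<Union>j. A i j) = {})))"

definition S1 :: "'o set set \<Rightarrow> ('o set \<Rightarrow> 'l set) \<Rightarrow> bool" where
  "S1 Fam rho \<longleftrightarrow>
     (\<forall>E\<in>Fam. \<exists>F\<in>Fam. F \<subseteq> E \<and>
        (\<forall>A\<in>I_rho Fam rho. \<exists>G\<in>Fam. rho G \<subseteq> rho F - A \<and>
           (\<forall>K. finite K \<longrightarrow> (\<exists>L. finite L \<and> rho (G - L) \<subseteq> rho (F - K)))))"

definition S2 :: "'o set set \<Rightarrow> ('o set \<Rightarrow> 'l set) \<Rightarrow> bool" where
  "S2 Fam rho \<longleftrightarrow>
     (\<forall>E\<in>Fam. \<exists>F\<in>Fam. F \<subseteq> E \<and>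
        (\<forall>B. B \<subseteq> rho F \<and> B \<notin> I_rho Fam rho \<longrightarrow> (\<exists>G\<in>Fam. rho G \<subseteq> B \<and>
           (\<forall>K. finite K \<longrightarrow> (\<exists>L. finite L \<and> rho (G - L) \<subseteq> rho (F - K))))))"

definition rho_converges ::
  "'x topology \<Rightarrow> ('o set \<Rightarrow> 'l set) \<Rightarrow> ('l \<Rightarrow> 'x) \<Rightarrow> 'o set \<Rightarrow> 'x \<Rightarrow> bool" where
  "rho_converges X rho f F x \<longleftrightarrow>
     (\<forall>U. openin X U \<and> x \<in> U \<longrightarrow> (\<exists>K. finite K \<and> f ` rho (F - K) \<subseteq> U))"

definition FinBW :: "'o set set \<Rightarrow> ('o set \<Rightarrow> 'l set) \<Rightarrow> 'x topology \<Rightarrow> bool" where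
  "FinBW Fam rho X \<longleftrightarrow>
     (\<forall>f :: 'l \<Rightarrow> 'x. f ` UNIV \<subseteq> topspace X \<longrightarrow>
        (\<exists>F\<in>Fam. \<exists>x\<in>topspace X. rho_converges X rho f F x))"

text \<open>Pt i j represents the ordinal omega*i + j, Top represents omega^2.\<close>

datatype omega2p1 = Pt nat nat | Top

instantiation omega2p1 :: linorder
begin

fun less_eq_omega2p1 :: "omega2p1 \<Rightarrow> omega2p1 \<Rightarrow> bool" where
  "less_eq_omega2p1 _ Top = True"
| "less_eq_omega2p1 Top (Pt _ _) = False"
| "less_eq_omega2p1 (Pt i j) (Pt k l) = (i < k \<or> (i = k \<and> j \<le> l))"

definition less_omega2p1 :: "omega2p1 \<Rightarrow> omega2p1 \<Rightarrow> bool" where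
  "less_omega2p1 x y \<longleftrightarrow> x \<le> y \<and> \<not> y \<le> x"

instance
proof
  fix x y z :: omega2p1
  show "x < y \<longleftrightarrow> x \<le> y \<and> \<not> y \<le> x" by (simp add: less_omega2p1_def)
  show "x \<le> x" by (cases x) auto
  show "x \<le> y \<Longrightarrow> y \<le> z \<Longrightarrow> x \<le> z"
    by (cases x; cases y; cases z) auto
  show "x \<le> y \<Longrightarrow> y \<le> x \<Longrightarrow> x = y"
    by (cases x; cases y) auto
  show "x \<le> y \<or> y \<le> x"
    by (cases x; cases y) auto
qed

end

instantiation omega2p1 :: linorder_topology
begin

definition open_omega2p1 :: "omega2p1 set \<Rightarrow> bool" where
  "open_omega2p1 = generate_topology (range lessThan \<union> range greaterThan)"

instance by standard (simp add: open_omega2p1_def)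

end

end

theory Submission
  imports Defs
begin


context
  fixes Fam :: "'o set set" and rho :: "'o set \<Rightarrow> 'l set"
  assumes pr: "partition_regular Fam rho"
begin

lemma pr_parts: "(\<forall>F\<in>Fam. \<forall>K. finite K \<longrightarrow> F - K \<in> Fam) \<and> (\<forall>F\<in>Fam. infinite (rho F)) \<and>
     (\<forall>E\<in>Fam. \<forall>F\<in>Fam. E \<subseteq> F \<longrightarrow> rho E \<subseteq> rho F) \<and>
     (\<forall>F\<in>Fam. \<forall>A B. rho F = A \<union> B \<longrightarrow> (\<exists>E\<in>Fam. rho E \<subseteq> A \<or> rho E \<subseteq> B)) \<and>
     (\<forall>E\<in>Fam. \<exists>F\<in>Fam. F \<subseteq> E \<and>
        (\<forall>a\<in>rho F. \<exists>K. finite K \<and> a \<notin> rho (F - K)))"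
  using pr unfolding partition_regular_def
  apply (elim conjE)
  apply (intro conjI)
      apply assumption+
  done

lemma pr_diff: "F \<in> Fam \<Longrightarrow> finite K \<Longrightarrow> F - K \<in> Fam"
  using pr_parts by simp

lemma pr_mono: "E \<in> Fam \<Longrightarrow> F \<in> Fam \<Longrightarrow> E \<subseteq> F \<Longrightarrow> rho E \<subseteq> rho F"
  using pr_parts by simp

lemma pr_inf: "F \<in> Fam \<Longrightarrow> infinite (rho F)"
  using pr_parts by simp

lemma pr_ne: "F \<in> Fam \<Longrightarrow> rho F \<noteq> {}"
  using pr_inf by fastforce

lemma pr_R: "F \<in> Fam \<Longrightarrow> rho F = A \<union> B \<Longrightarrow> \<exists>E\<in>Fam. rho E \<subseteq> A \<or> rho E \<subseteq> B"
  using pr_parts by simp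

lemma pr_S: "E \<in> Fam \<Longrightarrow> \<exists>F\<in>Fam. F \<subseteq> E \<and> (\<forall>a\<in>rho F. \<exists>K. finite K \<and> a \<notin> rho (F - K))"
  using pr_parts by simp

lemma mono_diff: "F \<in> Fam \<Longrightarrow> finite K' \<Longrightarrow> K \<subseteq> K' \<Longrightarrow> rho (F - K') \<subseteq> rho (F - K)"
  by (rule pr_mono) (auto intro: pr_diff finite_subset)

lemma mono_diff2: "E \<in> Fam \<Longrightarrow> F \<in> Fam \<Longrightarrow> E \<subseteq> F \<Longrightarrow> finite K \<Longrightarrow> rho (E - K) \<subseteq> rho (F - K)"
  by (rule pr_mono) (auto intro: pr_diff)

lemma I_empty: "{} \<in> I_rho Fam rho"
  using pr_ne unfolding I_rho_def by auto

lemma I_Un: "A \<in> I_rho Fam rho \<Longrightarrow> B \<in> I_rho Fam rho \<Longrightarrow> A \<union> B \<in> I_rho Fam rho"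
proof -
  assume a: "A \<in> I_rho Fam rho" "B \<in> I_rho Fam rho"
  show ?thesis unfolding I_rho_def
  proof (clarify)
    fix F assume F: "F \<in> Fam" "rho F \<subseteq> A \<union> B"
    then have "rho F = (rho F \<inter> A) \<union> (rho F \<inter> B)" by auto
    from pr_R[OF F(1) this] obtain E where "E \<in> Fam" "rho E \<subseteq> A \<or> rho E \<subseteq> B" by blast
    with a show False unfolding I_rho_def by auto
  qed
qed

lemma I_UN: "finite S \<Longrightarrow> (\<And>x. x \<in> S \<Longrightarrow> g x \<in> I_rho Fam rho) \<Longrightarrow> (\<Union>x\<in>S. g x) \<in> I_rho Fam rho"
  by (induction S rule: finite_induct) (auto intro: I_Un I_empty)

lemma not_I: "F \<in> Fam \<Longrightarrow> rho F \<notin> I_rho Fam rho"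
  unfolding I_rho_def by auto

end

lemma diag:
  fixes R :: "nat \<Rightarrow> 'a set" and Y :: "nat \<Rightarrow> 'a set"
  assumes dec: "\<And>m m'. m \<le> m' \<Longrightarrow> R m' \<subseteq> R m"
  and empty: "\<And>a. \<exists>m. a \<notin> R m"
  and hit: "\<And>n m. n \<in> J \<Longrightarrow> Y n \<inter> R m \<noteq> {}"
  shows "\<exists>Z. (\<forall>m. finite (Z - R m)) \<and> (\<forall>n\<in>J. infinite (Z \<inter> Y n))"
proof -
  define q where "q n m = (SOME a. a \<in> Y n \<inter> R m)" for n m
  have q: "n \<in> J \<Longrightarrow> q n m \<in> Y n \<inter> R m" for n m
    unfolding q_def using hit[of n m] by (metis all_not_in_conv someI)
  define Z where "Z = {q n m | n m. n \<in> J \<and> n \<le> m}"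
  have "finite (Z - R m)" for m
  proof -
    have "Z - R m \<subseteq> (\<lambda>(n, m'). q n m') ` ({..<m} \<times> {..<m})"
    proof
      fix a assume "a \<in> Z - R m"
      then obtain n m' where a: "a = q n m'" "n \<in> J" "n \<le> m'" "a \<notin> R m" unfolding Z_def by blast
      have "m' < m"
      proof (rule ccontr)
        assume "\<not> m' < m"
        then have "R m' \<subseteq> R m" using dec by simp
        with q[OF a(2), of m'] a show False by auto
      qed
      with a show "a \<in> (\<lambda>(n, m'). q n m') ` ({..<m} \<times> {..<m})" by force
    qed
    then show ?thesis by (rule finite_subset) auto
  qed
  moreover have "infinite (Z \<inter> Y n)" if n: "n \<in> J" for n
  proof
    assume fin: "finite (Z \<inter> Y n)"
    define g where "g a = (SOME m. a \<notin> R m)" for a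
    have g: "a \<notin> R (g a)" for a unfolding g_def using empty[of a] by (rule someI_ex)
    define M where "M = Max (insert n (g ` (Z \<inter> Y n)))"
    have fin2: "finite (insert n (g ` (Z \<inter> Y n)))" using fin by simp
    have nM: "n \<le> M" unfolding M_def using fin2 by simp
    have qZ: "q n M \<in> Z \<inter> Y n" using q[OF n, of M] nM n unfolding Z_def by blast
    then have "g (q n M) \<le> M" unfolding M_def using fin2 by simp
    then have "R M \<subseteq> R (g (q n M))" by (rule dec)
    with g[of "q n M"] q[OF n, of M] show False by auto
  qed
  ultimately show ?thesis by blast
qed

lemma exhaust:
  assumes "countable (UNIV::'o set)" "finite (K::'o set)"
  shows "\<exists>m. K \<subseteq> from_nat_into (UNIV::'o set) ` {..<m}"
proof -
  define e where "e = from_nat_into (UNIV::'o set)"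
  define S where "S = (\<lambda>k. SOME n. e n = k) ` K"
  have "\<exists>n. e n = k" for k unfolding e_def using from_nat_into_surj[OF assms(1)] by blast
  then have ek: "e (SOME n. e n = k) = k" for k by (rule someI_ex)
  have "finite S" unfolding S_def using assms(2) by simp
  then obtain m where "S \<subseteq> {..<m}" using finite_nat_bounded by blast
  then have "K \<subseteq> e ` {..<m}" unfolding S_def using ek by (metis image_mono image_image image_ident subset_trans image_cong[OF refl ek] order_refl)
  then show ?thesis unfolding e_def by blast
qed


lemma BI_intro:
  assumes "\<forall>i<i0. \<exists>j0. \<forall>j\<ge>j0. finite {k. (i,j,k) \<in> A}"
    and "\<forall>i\<ge>i0. finite {(j,k). (i,j,k) \<in> A}"
  shows "A \<in> BI"
  using assms unfolding BI_def FIN2_def by auto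

lemma fin_sec: "finite (K::(nat\<times>nat\<times>nat) set) \<Longrightarrow> finite {(j,k). (i,j,k) \<in> K}"
  by (rule finite_subset[of _ "snd ` K"]) force+

lemma fin_row: "finite (K::(nat\<times>nat\<times>nat) set) \<Longrightarrow> finite {k. (i,j,k) \<in> K}"
  by (rule finite_subset[of _ "snd ` snd ` K"]) force+

context
  fixes Fam :: "'o set set" and rho :: "'o set \<Rightarrow> 'l set"
  assumes pr: "partition_regular Fam rho"
begin

lemma part1a:
  assumes "katetov_le (ideal_plus BI) rho_ideal Fam rho"
  shows "\<not> P2_minus Fam rho"
proof
  assume P2: "P2_minus Fam rho"
  obtain f :: "'l \<Rightarrow> nat \<times> nat \<times> nat" where kf: "\<forall>F1\<in>Fam. \<exists>F2\<in>ideal_plus BI. \<forall>K1. finite K1 \<longrightarrow>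
        (\<exists>K2. finite K2 \<and> rho_ideal (F2 - K2) \<subseteq> f ` rho (F1 - K1))"
    using assms[unfolded katetov_le_def] by (elim exE) (rule that)
  define A where "A i j = {a. fst (f a) = i \<and> fst (snd (f a)) = j}" for i j
  have disj: "\<forall>i j i' j'. (i, j) \<noteq> (i', j') \<longrightarrow> A i j \<inter> A i' j' = {}"
    unfolding A_def by auto
  have un: "(\<Union>i. \<Union>j. A i j) = UNIV" unfolding A_def by auto
  have AI: "A i j \<in> I_rho Fam rho" for i j
    unfolding I_rho_def
  proof (clarify)
    fix F assume F: "F \<in> Fam" "rho F \<subseteq> A i j"
    obtain F2 where F2: "F2 \<notin> BI" "\<forall>K1. finite K1 \<longrightarrow>
        (\<exists>K2. finite K2 \<and> F2 - K2 \<subseteq> f ` rho (F - K1))"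
      using kf F(1) unfolding ideal_plus_def rho_ideal_def by blast
    obtain K2 where K2: "finite K2" "F2 - K2 \<subseteq> f ` rho F" using F2(2)[rule_format, of "{}"] by auto
    have sub: "x \<in> F2 \<Longrightarrow> x \<notin> K2 \<Longrightarrow> fst x = i \<and> fst (snd x) = j" for x
      using K2(2) F(2) unfolding A_def by auto
    have "F2 \<in> BI"
    proof (rule BI_intro[of "Suc i"])
      show "\<forall>i'<Suc i. \<exists>j0. \<forall>j'\<ge>j0. finite {k. (i',j',k) \<in> F2}"
      proof (intro allI impI exI[of _ "Suc j"])
        fix i' j' assume "j' \<ge> Suc j"
        then have "{k. (i',j',k) \<in> F2} \<subseteq> {k. (i',j',k) \<in> K2}" using sub by fastforce
        then show "finite {k. (i',j',k) \<in> F2}" using fin_row[OF K2(1)] finite_subset by blast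
      qed
      show "\<forall>i'\<ge>Suc i. finite {(j',k). (i',j',k) \<in> F2}"
      proof (intro allI impI)
        fix i' assume "i' \<ge> Suc i"
        then have "{(j',k). (i',j',k) \<in> F2} \<subseteq> {(j',k). (i',j',k) \<in> K2}" using sub by fastforce
        then show "finite {(j',k). (i',j',k) \<in> F2}" using fin_sec[OF K2(1)] finite_subset by blast
      qed
    qed
    with F2(1) show False by blast
  qed
  obtain F where F: "F \<in> Fam" and a: "\<forall>i j. \<exists>K. finite K \<and> rho (F - K) \<inter> A i j = {}"
     and b: "\<exists>i0. \<forall>i>i0. \<exists>K. finite K \<and> rho (F - K) \<inter> (\<Union>j. A i j) = {}"
  proof -
    have AI': "\<forall>i j. A i j \<in> I_rho Fam rho" using AI by blast
    show ?thesis
      using P2[unfolded P2_minus_def, THEN spec[of _ A], THEN mp, OF conjI[OF disj conjI[OF un AI']]]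
      by (elim bexE conjE) (rule that)
  qed
  obtain i0 where i0: "\<forall>i>i0. \<exists>K. finite K \<and> rho (F - K) \<inter> (\<Union>j. A i j) = {}" using b by blast
  obtain F2 where F2: "F2 \<notin> BI" "\<forall>K1. finite K1 \<longrightarrow>
        (\<exists>K2. finite K2 \<and> F2 - K2 \<subseteq> f ` rho (F - K1))"
    using kf F unfolding ideal_plus_def rho_ideal_def by blast
  have "F2 \<in> BI"
  proof (rule BI_intro[of "Suc i0"])
    show "\<forall>i<Suc i0. \<exists>j0. \<forall>j\<ge>j0. finite {k. (i,j,k) \<in> F2}"
    proof (intro allI impI exI[of _ 0])
      fix i j
      obtain K where K: "finite K" "rho (F - K) \<inter> A i j = {}" using a by blast
      obtain K2 where K2: "finite K2" "F2 - K2 \<subseteq> f ` rho (F - K)" using F2(2) K(1) by blast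
      have "{k. (i,j,k) \<in> F2} \<subseteq> {k. (i,j,k) \<in> K2}"
      proof
        fix k assume "k \<in> {k. (i,j,k) \<in> F2}"
        show "k \<in> {k. (i,j,k) \<in> K2}"
        proof (rule ccontr)
          assume "k \<notin> {k. (i,j,k) \<in> K2}"
          with \<open>k \<in> _\<close> K2(2) obtain a where "a \<in> rho (F - K)" "f a = (i,j,k)" by force
          with K(2) show False unfolding A_def by auto
        qed
      qed
      then show "finite {k. (i,j,k) \<in> F2}" using fin_row[OF K2(1)] finite_subset by blast
    qed
    show "\<forall>i\<ge>Suc i0. finite {(j,k). (i,j,k) \<in> F2}"
    proof (intro allI impI)
      fix i assume "i \<ge> Suc i0"
      then have "i > i0" by simp
      then have "\<exists>K. finite K \<and> rho (F - K) \<inter> (\<Union>j. A i j) = {}" using i0 by blast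
      then obtain K where K: "finite K" "rho (F - K) \<inter> (\<Union>j. A i j) = {}" by blast
      obtain K2 where K2: "finite K2" "F2 - K2 \<subseteq> f ` rho (F - K)" using F2(2) K(1) by blast
      have "{(j,k). (i,j,k) \<in> F2} \<subseteq> {(j,k). (i,j,k) \<in> K2}"
      proof
        fix x assume "x \<in> {(j,k). (i,j,k) \<in> F2}"
        then obtain j k where x: "x = (j,k)" "(i,j,k) \<in> F2" by blast
        show "x \<in> {(j,k). (i,j,k) \<in> K2}"
        proof (rule ccontr)
          assume "x \<notin> {(j,k). (i,j,k) \<in> K2}"
          with x K2(2) obtain a where "a \<in> rho (F - K)" "f a = (i,j,k)" by force
          with K(2) show False unfolding A_def by auto
        qed
      qed
      then show "finite {(j,k). (i,j,k) \<in> F2}" using fin_sec[OF K2(1)] finite_subset by blast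
    qed
  qed
  with F2(1) show False by blast
qed

end


lemma o_less_Pt[simp]: "Pt i j < Pt k l \<longleftrightarrow> i < k \<or> (i = k \<and> j < l)"
  unfolding less_omega2p1_def by auto
lemma o_less_Top[simp]: "Pt i j < Top"
  unfolding less_omega2p1_def by auto
lemma o_Top_less[simp]: "\<not> Top < x"
  unfolding less_omega2p1_def by (cases x) auto

lemma o_cases: "x = Top \<or> x = Pt 0 0 \<or> (\<exists>i. x = Pt (Suc i) 0) \<or> (\<exists>i j. x = Pt i (Suc j))"
proof (cases x)
  case (Pt i j) then show ?thesis by (cases i; cases j) auto
qed simp

context
  fixes Fam :: "'o set set" and rho :: "'o set \<Rightarrow> 'l set"
  assumes pr: "partition_regular Fam rho"
begin

lemma part2a:
  assumes fbw: "FinBW Fam rho (euclidean :: omega2p1 topology)"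
  shows "P2_minus Fam rho"
  unfolding P2_minus_def
proof (intro allI impI, elim conjE)
  fix A :: "nat \<Rightarrow> nat \<Rightarrow> 'l set"
  assume disj: "\<forall>i j i' j'. (i, j) \<noteq> (i', j') \<longrightarrow> A i j \<inter> A i' j' = {}"
    and un: "(\<Union>i. \<Union>j. A i j) = UNIV" and AI: "\<forall>i j. A i j \<in> I_rho Fam rho"
  define ij where "ij a = (SOME p. a \<in> A (fst p) (snd p))" for a
  have ijA: "a \<in> A (fst (ij a)) (snd (ij a))" for a
  proof -
    have "a \<in> (\<Union>i. \<Union>j. A i j)" using un by simp
    then obtain i j where "a \<in> A i j" by blast
    then have "\<exists>p. a \<in> A (fst p) (snd p)" by (intro exI[of _ "(i, j)"]) simp
    then show ?thesis unfolding ij_def by (rule someI_ex)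
  qed
  have ij_iff: "a \<in> A i j \<longleftrightarrow> ij a = (i, j)" for a i j
  proof
    assume aA: "a \<in> A i j"
    show "ij a = (i, j)"
    proof (rule ccontr)
      assume ne: "ij a \<noteq> (i, j)"
      then have "(fst (ij a), snd (ij a)) \<noteq> (i, j)" by simp
      then have "A (fst (ij a)) (snd (ij a)) \<inter> A i j = {}" by (rule disj[rule_format])
      with ijA[of a] aA show False by blast
    qed
  next
    assume "ij a = (i, j)" then show "a \<in> A i j" using ijA[of a] by simp
  qed
  define f where "f a = Pt (fst (ij a)) (Suc (snd (ij a)))" for a
  have f_iff: "f a = Pt i (Suc j) \<longleftrightarrow> a \<in> A i j" for a i j
    unfolding f_def ij_iff by (metis Suc_inject omega2p1.inject prod.collapse fst_conv snd_conv)
  have fA: "f a = Pt i (Suc j)" if "a \<in> A i j" for a i j using that f_iff by blast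
  obtain F x where F: "F \<in> Fam" and conv: "rho_converges euclidean rho f F x"
  proof -
    have "\<exists>F\<in>Fam. \<exists>x\<in>topspace euclidean. rho_converges euclidean rho f F x"
      using fbw unfolding FinBW_def by simp
    then show ?thesis using that by blast
  qed
  have conv': "\<exists>K. finite K \<and> (\<forall>a\<in>rho (F - K). f a \<in> U)" if hyp: "open U" "x \<in> U" for U
  proof -
    have "openin euclidean U \<and> x \<in> U" using open_openin[THEN iffD1, OF hyp(1)] hyp(2) by (rule conjI)
    then obtain K where "finite K" "f ` rho (F - K) \<subseteq> U" using conv unfolding rho_converges_def by blast
    then show ?thesis by blast
  qed
  have col: "\<exists>K. finite K \<and> rho (F - K) \<inter> (\<Union>j. A i j) = {}"
    if hyp: "open U" "x \<in> U" "\<And>j. Pt i (Suc j) \<notin> U" for U i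
  proof -
    obtain K where K: "finite K" "\<forall>a\<in>rho (F - K). f a \<in> U" using conv'[OF hyp(1,2)] by blast
    have "rho (F - K) \<inter> (\<Union>j. A i j) = {}"
    proof (rule ccontr)
      assume "rho (F - K) \<inter> (\<Union>j. A i j) \<noteq> {}"
      then obtain a j where a: "a \<in> rho (F - K)" "a \<in> A i j" by blast
      then have "f a \<in> U" "f a = Pt i (Suc j)" using K(2) fA by auto
      with hyp(3)[of j] show False by simp
    qed
    with K(1) show ?thesis by blast
  qed
  have cell: "\<exists>K. finite K \<and> rho (F - K) \<inter> A i j = {}"
    if hyp: "open U" "x \<in> U" "Pt i (Suc j) \<notin> U" for U i j
  proof -
    obtain K where K: "finite K" "\<forall>a\<in>rho (F - K). f a \<in> U" using conv'[OF hyp(1,2)] by blast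
    have "rho (F - K) \<inter> A i j = {}"
    proof (rule ccontr)
      assume "rho (F - K) \<inter> A i j \<noteq> {}"
      then obtain a where a: "a \<in> rho (F - K)" "a \<in> A i j" by blast
      then have "f a \<in> U" "f a = Pt i (Suc j)" using K(2) fA by auto
      with hyp(3) show False by simp
    qed
    with K(1) show ?thesis by blast
  qed
  have col_cell: "\<exists>K. finite K \<and> rho (F - K) \<inter> A i j = {}"
    if hyp: "\<exists>K. finite K \<and> rho (F - K) \<inter> (\<Union>j. A i j) = {}" for i j
  proof -
    obtain K where K: "finite K" "rho (F - K) \<inter> (\<Union>j. A i j) = {}" using hyp by (elim exE conjE)
    then have "rho (F - K) \<inter> A i j = {}" by blast
    with K(1) show ?thesis by (intro exI conjI)
  qed
  consider "x = Top" | "x = Pt 0 0" | i where "x = Pt (Suc i) 0" | i j where "x = Pt i (Suc j)"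
    using o_cases by blast
  then show "\<exists>F\<in>Fam. (\<forall>i j. \<exists>K. finite K \<and> rho (F - K) \<inter> A i j = {}) \<and>
               (\<exists>i0. \<forall>i>i0. \<exists>K. finite K \<and> rho (F - K) \<inter> (\<Union>j. A i j) = {})"
  proof cases
    case 1
    have c: "\<exists>K. finite K \<and> rho (F - K) \<inter> (\<Union>j. A i j) = {}" for i
      by (rule col[of "greaterThan (Pt (Suc i) 0)"]) (auto simp: 1)
    have a: "\<forall>i j. \<exists>K. finite K \<and> rho (F - K) \<inter> A i j = {}"
      by (intro allI col_cell c)
    have b: "\<forall>i>0. \<exists>K. finite K \<and> rho (F - K) \<inter> (\<Union>j. A i j) = {}"
      by (intro allI impI c)
    have b': "\<exists>i0. \<forall>i>i0. \<exists>K. finite K \<and> rho (F - K) \<inter> (\<Union>j. A i j) = {}"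
      by (rule exI[of _ 0]) (rule b)
    show ?thesis by (rule bexI[OF _ F]) (rule conjI[OF a b'])
  next
    case 2
    obtain K where K: "finite K" "\<forall>a\<in>rho (F - K). f a \<in> lessThan (Pt 0 1)"
      using conv'[of "lessThan (Pt 0 1)"] 2 by auto
    have "rho (F - K) = {}"
    proof (rule ccontr)
      assume "rho (F - K) \<noteq> {}"
      then obtain a where "a \<in> rho (F - K)" by blast
      with K(2) have "f a < Pt 0 1" by auto
      then show False unfolding f_def by simp
    qed
    with pr_ne[OF pr pr_diff[OF pr F K(1)]] show ?thesis by blast
  next
    case (3 i)
    have c: "\<exists>K. finite K \<and> rho (F - K) \<inter> (\<Union>j. A i' j) = {}" if "i' \<noteq> i" for i'
      by (rule col[of "greaterThan (Pt i 0) \<inter> lessThan (Pt (Suc i) 1)"]) (use that in \<open>auto simp: 3\<close>)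
    have d: "\<exists>K. finite K \<and> rho (F - K) \<inter> A i j = {}" for j
      by (rule cell[of "greaterThan (Pt i (Suc j)) \<inter> lessThan (Pt (Suc i) 1)"]) (auto simp: 3)
    have a: "\<forall>i' j. \<exists>K. finite K \<and> rho (F - K) \<inter> A i' j = {}"
    proof (intro allI)
      fix i' j show "\<exists>K. finite K \<and> rho (F - K) \<inter> A i' j = {}"
      proof (cases "i' = i")
        case True then show ?thesis using d[of j] by simp
      next
        case False then show ?thesis by (intro col_cell c)
      qed
    qed
    have b: "\<forall>i'>i. \<exists>K. finite K \<and> rho (F - K) \<inter> (\<Union>j. A i' j) = {}"
      by (intro allI impI c) simp
    have b': "\<exists>i0. \<forall>i>i0. \<exists>K. finite K \<and> rho (F - K) \<inter> (\<Union>j. A i j) = {}"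
      by (rule exI[of _ i]) (rule b)
    show ?thesis by (rule bexI[OF _ F]) (rule conjI[OF a b'])
  next
    case (4 i j)
    obtain K where K: "finite K" "\<forall>a\<in>rho (F - K). f a \<in> greaterThan (Pt i j) \<inter> lessThan (Pt i (Suc (Suc j)))"
      using conv'[OF open_Int[OF open_greaterThan open_lessThan], of "Pt i j" "Pt i (Suc (Suc j))"] 4 by auto
    have "rho (F - K) \<subseteq> A i j"
    proof
      fix a assume "a \<in> rho (F - K)"
      with K(2) have "f a > Pt i j" "f a < Pt i (Suc (Suc j))" by auto
      then have "f a = Pt i (Suc j)" unfolding f_def by auto
      then show "a \<in> A i j" using f_iff by blast
    qed
    then have "A i j \<notin> I_rho Fam rho" using pr_diff[OF pr F K(1)] unfolding I_rho_def by blast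
    with AI show ?thesis by blast
  qed
qed

end


context
  fixes Fam :: "'o set set" and rho :: "'o set \<Rightarrow> 'l set"
  assumes pr: "partition_regular Fam rho"
begin

lemma part2b:
  assumes s2: "S2 Fam rho" and p2: "P2_minus Fam rho"
  shows "FinBW Fam rho (euclidean :: omega2p1 topology)"
  unfolding FinBW_def
proof (intro allI impI)
  fix f :: "'l \<Rightarrow> omega2p1"
  show "\<exists>F\<in>Fam. \<exists>x\<in>topspace euclidean. rho_converges euclidean rho f F x"
  proof (cases "\<exists>y. f -` {y} \<notin> I_rho Fam rho")
    case True
    then obtain y F where F: "F \<in> Fam" "rho F \<subseteq> f -` {y}" unfolding I_rho_def by blast
    have "rho_converges euclidean rho f F y"
      unfolding rho_converges_def
    proof (intro allI impI exI[of _ "{}"])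
      fix U assume "openin euclidean U \<and> y \<in> U"
      then show "finite {} \<and> f ` rho (F - {}) \<subseteq> U" using F by auto
    qed
    then show ?thesis using F by auto
  next
    case False
    then have fibI: "f -` {y} \<in> I_rho Fam rho" for y by blast
    define A where "A i j = (if i = 0 then (if j = 0 then f -` {Top} else {}) else f -` {Pt (i-1) j})" for i j
    have disj: "\<forall>i j i' j'. (i, j) \<noteq> (i', j') \<longrightarrow> A i j \<inter> A i' j' = {}"
      unfolding A_def by auto
    have un: "(\<Union>i. \<Union>j. A i j) = UNIV"
    proof -
      have "a \<in> (\<Union>i. \<Union>j. A i j)" for a
      proof (cases "f a")
        case (Pt i j) then have "a \<in> A (Suc i) j" unfolding A_def by auto
        then show ?thesis by blast
      next
        case Top then have "a \<in> A 0 0" unfolding A_def by auto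
        then show ?thesis by blast
      qed
      then show ?thesis by blast
    qed
    have AI: "\<forall>i j. A i j \<in> I_rho Fam rho"
      unfolding A_def using fibI I_empty[OF pr] by auto
    obtain F0 where F0: "F0 \<in> Fam" and a: "\<forall>i j. \<exists>K. finite K \<and> rho (F0 - K) \<inter> A i j = {}"
      and b: "\<exists>i0. \<forall>i>i0. \<exists>K. finite K \<and> rho (F0 - K) \<inter> (\<Union>j. A i j) = {}"
      using p2[unfolded P2_minus_def, THEN spec[of _ A], THEN mp, OF conjI[OF disj conjI[OF un AI]]]
      by (elim bexE conjE) (rule that)
    obtain i0 where i0: "\<forall>i>i0. \<exists>K. finite K \<and> rho (F0 - K) \<inter> (\<Union>j. A i j) = {}" using b by blast
    obtain F where F: "F \<in> Fam" "F \<subseteq> F0" and s2F: "\<forall>B. B \<subseteq> rho F \<and> B \<notin> I_rho Fam rho \<longrightarrow> (\<exists>G\<in>Fam. rho G \<subseteq> B \<and>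
           (\<forall>K. finite K \<longrightarrow> (\<exists>L. finite L \<and> rho (G - L) \<subseteq> rho (F - K))))"
      using bspec[OF s2[unfolded S2_def] F0] by (elim bexE conjE) (rule that)
    have inh: "\<exists>K. finite K \<and> (\<forall>a\<in>rho (F - K). P a)" if hyp: "\<exists>K. finite K \<and> rho (F0 - K) \<subseteq> {a. P a}" for P
    proof -
      obtain K where "finite K" "rho (F0 - K) \<subseteq> {a. P a}" using hyp by blast
      moreover have "rho (F - K) \<subseteq> rho (F0 - K)" using mono_diff2[OF pr F(1) F0 F(2) \<open>finite K\<close>] .
      ultimately show ?thesis by blast
    qed
    have a': "\<exists>K. finite K \<and> (\<forall>a\<in>rho (F - K). f a \<noteq> y)" for y
    proof (cases y)
      case (Pt i j)
      obtain K where K: "finite K" "rho (F0 - K) \<inter> A (Suc i) j = {}" using a by blast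
      then have "rho (F0 - K) \<subseteq> {a. f a \<noteq> y}" using Pt unfolding A_def by auto
      then have "\<exists>K. finite K \<and> rho (F0 - K) \<subseteq> {a. f a \<noteq> y}" using K(1) by blast
      then show ?thesis by (rule inh)
    next
      case Top
      obtain K where K: "finite K" "rho (F0 - K) \<inter> A 0 0 = {}" using a by blast
      then have "rho (F0 - K) \<subseteq> {a. f a \<noteq> y}" using Top unfolding A_def by auto
      then have "\<exists>K. finite K \<and> rho (F0 - K) \<subseteq> {a. f a \<noteq> y}" using K(1) by blast
      then show ?thesis by (rule inh)
    qed
    have b': "\<exists>K. finite K \<and> (\<forall>a\<in>rho (F - K). \<forall>j. f a \<noteq> Pt c j)" if hyp: "c \<ge> i0" for c
    proof -
      have "Suc c > i0" using hyp by simp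
      then have "\<exists>K. finite K \<and> rho (F0 - K) \<inter> (\<Union>j. A (Suc c) j) = {}" using i0 by blast
      then obtain K where K: "finite K" "rho (F0 - K) \<inter> (\<Union>j. A (Suc c) j) = {}" by blast
      then have "rho (F0 - K) \<subseteq> {a. \<forall>j. f a \<noteq> Pt c j}" unfolding A_def by auto
      then have "\<exists>K. finite K \<and> rho (F0 - K) \<subseteq> {a. \<forall>j. f a \<noteq> Pt c j}" using K(1) by blast
      then show ?thesis by (rule inh)
    qed
    define P where "P c = rho F \<inter> f -` {Pt c j | j. True}" for c
    define Q where "Q = rho F \<inter> f -` ({Pt c j | c j. c \<ge> i0} \<union> {Top})"
    have cover: "rho F = Q \<union> (\<Union>c\<in>{..<i0}. P c)"
    proof -
      have *: "a \<in> Q \<union> (\<Union>c\<in>{..<i0}. P c)" if aF: "a \<in> rho F" for a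
      proof (cases "f a")
        case (Pt c j)
        show ?thesis
        proof (cases "c < i0")
          case True
          then have "a \<in> P c" using aF Pt unfolding P_def by auto
          then show ?thesis using True by blast
        next
          case False
          then have "a \<in> Q" using aF Pt unfolding Q_def by auto
          then show ?thesis by blast
        qed
      next
        case Top
        then have "a \<in> Q" using aF unfolding Q_def by auto
        then show ?thesis by blast
      qed
      show ?thesis
      proof (rule equalityI)
        show "rho F \<subseteq> Q \<union> (\<Union>c\<in>{..<i0}. P c)" using * by blast
        show "Q \<union> (\<Union>c\<in>{..<i0}. P c) \<subseteq> rho F" unfolding P_def Q_def by blast
      qed
    qed
    have "Q \<notin> I_rho Fam rho \<or> (\<exists>c<i0. P c \<notin> I_rho Fam rho)"
    proof (rule ccontr)
      assume "\<not> ?thesis"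
      then have "Q \<union> (\<Union>c\<in>{..<i0}. P c) \<in> I_rho Fam rho"
        by (intro I_Un[OF pr] I_UN[OF pr]) auto
      with cover not_I[OF pr F(1)] show False by simp
    qed
    then show ?thesis
    proof
      assume QI: "Q \<notin> I_rho Fam rho"
      obtain G where G: "G \<in> Fam" "rho G \<subseteq> Q" and lk: "\<forall>K. finite K \<longrightarrow> (\<exists>L. finite L \<and> rho (G - L) \<subseteq> rho (F - K))"
        using s2F QI unfolding Q_def by blast
      have "\<exists>L. finite L \<and> (c \<ge> i0 \<longrightarrow> (\<forall>a\<in>rho (G - L). \<forall>j. f a \<noteq> Pt c j))" for c
      proof (cases "c \<ge> i0")
        case True
        obtain K where K: "finite K" "\<forall>a\<in>rho (F - K). \<forall>j. f a \<noteq> Pt c j" using b'[OF True] by blast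
        obtain L where L: "finite L" "rho (G - L) \<subseteq> rho (F - K)" using lk K(1) by blast
        have "\<forall>a\<in>rho (G - L). \<forall>j. f a \<noteq> Pt c j" using L(2) K(2) by blast
        then show ?thesis using L(1) by blast
      qed auto
      then obtain Lf where Lf: "\<And>c. finite (Lf c)" "\<And>c. c \<ge> i0 \<Longrightarrow> \<forall>a\<in>rho (G - Lf c). \<forall>j. f a \<noteq> Pt c j"
        by metis
      have "rho_converges euclidean rho f G Top"
        unfolding rho_converges_def
      proof (intro allI impI)
        fix U assume "openin euclidean U \<and> Top \<in> U"
        then have U1: "openin euclidean U" and U2: "Top \<in> U" by simp_all
        have U: "open U" "Top \<in> U" using U1 U2 by (simp_all only: open_openin)
        obtain bb where bb: "bb < Top" "{bb<..Top} \<subseteq> U" using open_left[OF U, of "Pt 0 0"] by auto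
        then obtain n m where bnm: "bb = Pt n m" by (cases bb) auto
        define L where "L = (\<Union>c\<in>{..n}. Lf c)"
        have fL: "finite L" unfolding L_def using Lf(1) by auto
        have "f ` rho (G - L) \<subseteq> U"
        proof
          fix y assume "y \<in> f ` rho (G - L)"
          then obtain a where a: "a \<in> rho (G - L)" "y = f a" by blast
          have "a \<in> rho G" using a(1) mono_diff[OF pr G(1) fL, of "{}"] by auto
          then have aQ: "a \<in> Q" using G(2) by blast
          have nc: "f a \<noteq> Pt c j" if "c \<le> n" "c \<ge> i0" for c j
          proof -
            have "rho (G - L) \<subseteq> rho (G - Lf c)" by (rule mono_diff[OF pr G(1) fL]) (use that in \<open>auto simp: L_def\<close>)
            then show ?thesis using Lf(2)[OF that(2)] a(1) by blast
          qed
          have "bb < f a"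
          proof (cases "f a")
            case (Pt c j)
            then have "c \<ge> i0" using aQ unfolding Q_def by auto
            then have "c > n" using nc Pt by (meson not_le)
            then show ?thesis using Pt bnm by simp
          next
            case Top then show ?thesis using bnm by simp
          qed
          moreover have "f a \<le> Top" by (cases "f a") auto
          ultimately show "y \<in> U" using bb(2) a(2) by auto
        qed
        then show "\<exists>K. finite K \<and> f ` rho (G - K) \<subseteq> U" using fL by blast
      qed
      then show ?thesis using G(1) by auto
    next
      assume "\<exists>c<i0. P c \<notin> I_rho Fam rho"
      then obtain c where PI: "P c \<notin> I_rho Fam rho" by blast
      obtain G where G: "G \<in> Fam" "rho G \<subseteq> P c" and lk: "\<forall>K. finite K \<longrightarrow> (\<exists>L. finite L \<and> rho (G - L) \<subseteq> rho (F - K))"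
        using s2F PI unfolding P_def by blast
      have "\<exists>L. finite L \<and> (\<forall>a\<in>rho (G - L). f a \<noteq> Pt c j)" for j
      proof -
        obtain K where K: "finite K" "\<forall>a\<in>rho (F - K). f a \<noteq> Pt c j" using a' by blast
        obtain L where L: "finite L" "rho (G - L) \<subseteq> rho (F - K)" using lk K(1) by blast
        have "\<forall>a\<in>rho (G - L). f a \<noteq> Pt c j" using L(2) K(2) by blast
        then show ?thesis using L(1) by blast
      qed
      then obtain Lf where Lf: "\<And>j. finite (Lf j)" "\<And>j. \<forall>a\<in>rho (G - Lf j). f a \<noteq> Pt c j"
        by metis
      have "rho_converges euclidean rho f G (Pt (Suc c) 0)"
        unfolding rho_converges_def
      proof (intro allI impI)
        fix U assume "openin euclidean U \<and> Pt (Suc c) 0 \<in> U"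
        then have U1: "openin euclidean U" and U2: "Pt (Suc c) 0 \<in> U" by simp_all
        have U: "open U" "Pt (Suc c) 0 \<in> U" using U1 U2 by (simp_all only: open_openin)
        obtain bb where bb: "bb < Pt (Suc c) 0" "{bb<..Pt (Suc c) 0} \<subseteq> U" using open_left[OF U, of "Pt c 0"] by auto
        then obtain n m where bnm: "bb = Pt n m" by (cases bb) auto
        have nc: "n \<le> c" using bb(1) bnm by auto
        define L where "L = (\<Union>j\<in>{..m}. Lf j)"
        have fL: "finite L" unfolding L_def using Lf(1) by auto
        have "f ` rho (G - L) \<subseteq> U"
        proof
          fix y assume "y \<in> f ` rho (G - L)"
          then obtain a where a: "a \<in> rho (G - L)" "y = f a" by blast
          have "a \<in> rho G" using a(1) mono_diff[OF pr G(1) fL, of "{}"] by auto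
          then obtain j where j: "f a = Pt c j" using G(2) unfolding P_def by auto
          have "j > m"
          proof (rule ccontr)
            assume "\<not> j > m"
            then have "j \<in> {..m}" by simp
            then have "Lf j \<subseteq> L" unfolding L_def by blast
            then have "rho (G - L) \<subseteq> rho (G - Lf j)" by (rule mono_diff[OF pr G(1) fL])
            then show False using Lf(2)[of j] a(1) j by blast
          qed
          then have "bb < f a" "f a \<le> Pt (Suc c) 0" using j bnm nc
            by (auto simp: le_less)
          then show "y \<in> U" using bb(2) a(2) by auto
        qed
        then show "\<exists>K. finite K \<and> f ` rho (G - K) \<subseteq> U" using fL by blast
      qed
      then show ?thesis using G(1) by auto
    qed
  qed
qed

end


context
  fixes Fam :: "'o set set" and rho :: "'o set \<Rightarrow> 'l set"
  assumes pr: "partition_regular Fam rho"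
begin

lemma part1b:
  assumes cO: "countable (UNIV::'o set)" and cL: "countable (UNIV::'l set)"
    and s1: "S1 Fam rho" and np2: "\<not> P2_minus Fam rho"
  shows "katetov_le (ideal_plus BI) rho_ideal Fam rho"
proof -
  obtain A :: "nat \<Rightarrow> nat \<Rightarrow> 'l set" where
    disj: "\<forall>i j i' j'. (i, j) \<noteq> (i', j') \<longrightarrow> A i j \<inter> A i' j' = {}"
    and un: "(\<Union>i. \<Union>j. A i j) = UNIV" and AI: "\<forall>i j. A i j \<in> I_rho Fam rho"
    and nog: "\<not> (\<exists>F\<in>Fam. (\<forall>i j. \<exists>K. finite K \<and> rho (F - K) \<inter> A i j = {}) \<and>
               (\<exists>i0. \<forall>i>i0. \<exists>K. finite K \<and> rho (F - K) \<inter> (\<Union>j. A i j) = {}))"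
  proof -
    have "\<exists>A :: nat \<Rightarrow> nat \<Rightarrow> 'l set. ((\<forall>i j i' j'. (i, j) \<noteq> (i', j') \<longrightarrow> A i j \<inter> A i' j' = {}) \<and>
         (\<Union>i. \<Union>j. A i j) = UNIV \<and>
         (\<forall>i j. A i j \<in> I_rho Fam rho)) \<and> \<not> (\<exists>F\<in>Fam.
               (\<forall>i j. \<exists>K. finite K \<and> rho (F - K) \<inter> A i j = {}) \<and>
               (\<exists>i0. \<forall>i>i0. \<exists>K. finite K \<and> rho (F - K) \<inter> (\<Union>j. A i j) = {}))"
      using np2 unfolding P2_minus_def by (simp only: not_all not_imp)
    then show ?thesis by (elim exE conjE) (rule that)
  qed
  define ij where "ij a = (SOME p. a \<in> A (fst p) (snd p))" for a
  have ijA: "a \<in> A (fst (ij a)) (snd (ij a))" for a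
  proof -
    have "a \<in> (\<Union>i. \<Union>j. A i j)" using un by simp
    then obtain i j where "a \<in> A i j" by blast
    then have "\<exists>p. a \<in> A (fst p) (snd p)" by (intro exI[of _ "(i, j)"]) simp
    then show ?thesis unfolding ij_def by (rule someI_ex)
  qed
  have ij_iff: "a \<in> A i j \<longleftrightarrow> ij a = (i, j)" for a i j
  proof
    assume aA: "a \<in> A i j"
    show "ij a = (i, j)"
    proof (rule ccontr)
      assume ne: "ij a \<noteq> (i, j)"
      then have "(fst (ij a), snd (ij a)) \<noteq> (i, j)" by simp
      then have "A (fst (ij a)) (snd (ij a)) \<inter> A i j = {}" by (rule disj[rule_format])
      with ijA[of a] aA show False by blast
    qed
  next
    assume "ij a = (i, j)" then show "a \<in> A i j" using ijA[of a] by simp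
  qed
  define enc where "enc = to_nat_on (UNIV::'l set)"
  have inj_enc: "inj enc" unfolding enc_def using inj_on_to_nat_on[OF cL] .
  define f where "f a = (fst (ij a), snd (ij a), enc a)" for a
  show ?thesis unfolding katetov_le_def
  proof (intro exI[of _ f] ballI)
    fix F1 assume F1: "F1 \<in> Fam"
    obtain E' where E': "E' \<in> Fam" "E' \<subseteq> F1" and SE: "\<forall>a\<in>rho E'. \<exists>K. finite K \<and> a \<notin> rho (E' - K)"
      using pr_S[OF pr F1] by blast
    obtain F where F: "F \<in> Fam" "F \<subseteq> E'" and s1F: "\<forall>A\<in>I_rho Fam rho. \<exists>G\<in>Fam. rho G \<subseteq> rho F - A \<and>
           (\<forall>K. finite K \<longrightarrow> (\<exists>L. finite L \<and> rho (G - L) \<subseteq> rho (F - K)))"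
      using bspec[OF s1[unfolded S1_def] E'(1)] by (elim bexE conjE) (rule that)
    have FF1: "F \<subseteq> F1" using F E' by blast
    have SF: "\<exists>K. finite K \<and> a \<notin> rho (F - K)" if "a \<in> rho F" for a
    proof -
      have "a \<in> rho E'" using pr_mono[OF pr F(1) E'(1) F(2)] that by blast
      then obtain K where K: "finite K" "a \<notin> rho (E' - K)" using SE by blast
      moreover have "rho (F - K) \<subseteq> rho (E' - K)" by (rule mono_diff2[OF pr F(1) E'(1) F(2) K(1)])
      ultimately show ?thesis by blast
    qed
    define Km where "Km m = from_nat_into (UNIV::'o set) ` {..<m}" for m
    define R where "R m = rho (F - Km m)" for m
    have fKm: "finite (Km m)" for m unfolding Km_def by simp
    have exh: "\<exists>m. K \<subseteq> Km m" if "finite K" for K unfolding Km_def using exhaust[OF cO that] .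
    have dec: "R m' \<subseteq> R m" if "m \<le> m'" for m m'
      unfolding R_def by (rule mono_diff[OF pr F(1) fKm]) (use that in \<open>auto simp: Km_def\<close>)
    have R0: "R 0 = rho F" unfolding R_def Km_def by simp
    have empty: "\<exists>m. a \<notin> R m" for a
    proof (cases "a \<in> rho F")
      case True
      then obtain K where K: "finite K" "a \<notin> rho (F - K)" using SF by blast
      then obtain m where "K \<subseteq> Km m" using exh by blast
      then have "R m \<subseteq> rho (F - K)" unfolding R_def by (rule mono_diff[OF pr F(1) fKm])
      then show ?thesis using K by blast
    qed (use R0 in auto)
    define hit where "hit Y = (\<forall>K. finite K \<longrightarrow> rho (F - K) \<inter> Y \<noteq> {})" for Y
    have hitR: "hit Y \<Longrightarrow> Y \<inter> R m \<noteq> {}" for Y m unfolding hit_def R_def using fKm by blast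
    define H where "H = {i. hit (\<Union>j. A i j)}"
    define J where "J i = {j. hit (A i j)}" for i
    have fin_end: "\<exists>F2\<in>ideal_plus BI. \<forall>K1. finite K1 \<longrightarrow>
        (\<exists>K2. finite K2 \<and> rho_ideal (F2 - K2) \<subseteq> f ` rho (F1 - K1))"
      if Zf: "\<forall>m. finite (Z - R m)" and ZBI: "f ` Z \<notin> BI" for Z
    proof (intro bexI[of _ "f ` Z"] allI impI)
      show "f ` Z \<in> ideal_plus BI" using ZBI unfolding ideal_plus_def by simp
      fix K1 :: "'o set" assume K1: "finite K1"
      obtain m where m: "K1 \<subseteq> Km m" using exh[OF K1] by blast
      have "rho (F - Km m) \<subseteq> rho (F - K1)" by (rule mono_diff[OF pr F(1) fKm m])
      also have "\<dots> \<subseteq> rho (F1 - K1)" by (rule mono_diff2[OF pr F(1) F1 FF1 K1])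
      finally have RF1: "R m \<subseteq> rho (F1 - K1)" unfolding R_def .
      show "\<exists>K2. finite K2 \<and> rho_ideal (f ` Z - K2) \<subseteq> f ` rho (F1 - K1)"
      proof (intro exI[of _ "f ` (Z - R m)"] conjI)
        show "finite (f ` (Z - R m))" using Zf by simp
        show "rho_ideal (f ` Z - f ` (Z - R m)) \<subseteq> f ` rho (F1 - K1)"
          unfolding rho_ideal_def using RF1 by blast
      qed
    qed
    have cases: "infinite H \<or> (\<exists>i. infinite (J i))"
    proof (rule ccontr)
      assume "\<not> ?thesis"
      then have fH: "finite H" and fJ: "\<And>i. finite (J i)" by auto
      define Ps where "Ps = Sigma H J"
      have fPs: "finite Ps" unfolding Ps_def using fH fJ by auto
      define As where "As = (\<Union>p\<in>Ps. A (fst p) (snd p))"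
      have AsI: "As \<in> I_rho Fam rho" unfolding As_def using AI by (intro I_UN[OF pr fPs]) auto
      obtain G where G: "G \<in> Fam" "rho G \<subseteq> rho F - As" and lk: "\<forall>K. finite K \<longrightarrow> (\<exists>L. finite L \<and> rho (G - L) \<subseteq> rho (F - K))"
        using s1F AsI by blast
      have hitG: "hit Y" if "\<forall>L. finite L \<longrightarrow> rho (G - L) \<inter> Y \<noteq> {}" for Y
        unfolding hit_def
      proof (intro allI impI)
        fix K :: "'o set" assume "finite K"
        then obtain L where "finite L" "rho (G - L) \<subseteq> rho (F - K)" using lk by blast
        with that show "rho (F - K) \<inter> Y \<noteq> {}" by blast
      qed
      have colhit: "hit (\<Union>j. A i j)" if "hit (A i j)" for i j
        using that unfolding hit_def by blast
      show False
      proof (rule notE[OF nog], rule bexI[OF _ G(1)], intro conjI)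
        show "\<forall>i j. \<exists>K. finite K \<and> rho (G - K) \<inter> A i j = {}"
        proof (rule ccontr)
          assume "\<not> ?thesis"
          then obtain i j where ij: "\<forall>K. finite K \<longrightarrow> rho (G - K) \<inter> A i j \<noteq> {}" by blast
          then have "hit (A i j)" by (rule hitG)
          then have "(i, j) \<in> Ps" unfolding Ps_def H_def J_def using colhit by auto
          then have "A i j \<subseteq> As" unfolding As_def by force
          moreover have "rho (G - {}) \<inter> A i j \<noteq> {}" using ij by blast
          ultimately show False using G(2) by auto
        qed
        show "\<exists>i0. \<forall>i>i0. \<exists>K. finite K \<and> rho (G - K) \<inter> (\<Union>j. A i j) = {}"
        proof (rule ccontr)
          assume nb: "\<not> ?thesis"
          obtain k where k: "H \<subseteq> {..<k}" using finite_nat_bounded[OF fH] by blast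
          have "\<not> (\<forall>i>k. \<exists>K. finite K \<and> rho (G - K) \<inter> (\<Union>j. A i j) = {})"
          proof
            assume "\<forall>i>k. \<exists>K. finite K \<and> rho (G - K) \<inter> (\<Union>j. A i j) = {}"
            then have "\<exists>i0. \<forall>i>i0. \<exists>K. finite K \<and> rho (G - K) \<inter> (\<Union>j. A i j) = {}" by (rule exI)
            with nb show False by contradiction
          qed
          then obtain i where "i > k" "\<forall>K. finite K \<longrightarrow> rho (G - K) \<inter> (\<Union>j. A i j) \<noteq> {}" by auto
          then have "i \<in> H" "i > k" unfolding H_def using hitG by auto
          with k show False by auto
        qed
      qed
    qed
    from cases show "\<exists>F2\<in>ideal_plus BI. \<forall>K1. finite K1 \<longrightarrow>
        (\<exists>K2. finite K2 \<and> rho_ideal (F2 - K2) \<subseteq> f ` rho (F1 - K1))"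
    proof
      assume iH: "infinite H"
      obtain Z where Z: "\<forall>m. finite (Z - R m)" "\<forall>h\<in>H. infinite (Z \<inter> (\<Union>j. A h j))"
      proof -
        have hH: "\<And>n m. n \<in> H \<Longrightarrow> (\<Union>j. A n j) \<inter> R m \<noteq> {}" using hitR unfolding H_def by blast
        show ?thesis using diag[where R=R and Y="\<lambda>h. \<Union>j. A h j" and J=H, OF dec empty hH] that by blast
      qed
      have "f ` Z \<notin> BI"
      proof
        assume "f ` Z \<in> BI"
        then obtain i0 where i0: "\<forall>i\<ge>i0. finite {(j, k). (i, j, k) \<in> f ` Z}" unfolding BI_def by blast
        obtain h where h: "h \<in> H" "h \<ge> i0" using iH infinite_nat_iff_unbounded_le by blast
        define g where "g a = (snd (ij a), enc a)" for a
        have "inj g" unfolding g_def using inj_enc by (auto simp: inj_def)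
        have "g ` (Z \<inter> (\<Union>j. A h j)) \<subseteq> {(j, k). (h, j, k) \<in> f ` Z}"
        proof
          fix y assume "y \<in> g ` (Z \<inter> (\<Union>j. A h j))"
          then obtain a j where a: "a \<in> Z" "a \<in> A h j" "y = g a" by blast
          then have "ij a = (h, j)" using ij_iff by blast
          then have "f a = (h, fst y, snd y)" unfolding f_def a(3) g_def by simp
          then show "y \<in> {(j, k). (h, j, k) \<in> f ` Z}" using a(1) by (cases y) force
        qed
        moreover have "infinite (g ` (Z \<inter> (\<Union>j. A h j)))"
          using Z(2) h(1) \<open>inj g\<close> by (metis finite_imageD inj_on_subset subset_UNIV)
        ultimately show False using i0 h(2) finite_subset by blast
      qed
      then show ?thesis using fin_end Z(1) by blast
    next
      assume "\<exists>i. infinite (J i)"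
      then obtain i where iJ: "infinite (J i)" by blast
      obtain Z where Z: "\<forall>m. finite (Z - R m)" "\<forall>j\<in>J i. infinite (Z \<inter> A i j)"
      proof -
        have hJ: "\<And>n m. n \<in> J i \<Longrightarrow> A i n \<inter> R m \<noteq> {}" using hitR unfolding J_def by blast
        show ?thesis using diag[where R=R and Y="\<lambda>j. A i j" and J="J i", OF dec empty hJ] that by blast
      qed
      have row: "infinite {k. (i, j, k) \<in> f ` Z}" if "j \<in> J i" for j
      proof -
        have "enc ` (Z \<inter> A i j) \<subseteq> {k. (i, j, k) \<in> f ` Z}"
        proof
          fix k assume "k \<in> enc ` (Z \<inter> A i j)"
          then obtain a where a: "a \<in> Z" "a \<in> A i j" "k = enc a" by blast
          then have "ij a = (i, j)" using ij_iff by blast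
          then have "f a = (i, j, k)" unfolding f_def a(3) by simp
          then show "k \<in> {k. (i, j, k) \<in> f ` Z}" using a(1) by force
        qed
        moreover have "infinite (enc ` (Z \<inter> A i j))"
          using Z(2) that inj_enc by (metis finite_imageD inj_on_subset subset_UNIV)
        ultimately show ?thesis using finite_subset by blast
      qed
      have "f ` Z \<notin> BI"
      proof
        assume "f ` Z \<in> BI"
        then obtain i0 where i0: "\<forall>i<i0. {(j, k). (i, j, k) \<in> f ` Z} \<in> FIN2"
          "\<forall>i\<ge>i0. finite {(j, k). (i, j, k) \<in> f ` Z}" unfolding BI_def by blast
        show False
        proof (cases "i < i0")
          case True
          then obtain j0 where j0: "\<forall>j\<ge>j0. finite {k. (j, k) \<in> {(j, k). (i, j, k) \<in> f ` Z}}"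
            using i0(1) unfolding FIN2_def by blast
          obtain j where j: "j \<in> J i" "j \<ge> j0" using iJ infinite_nat_iff_unbounded_le by blast
          then show False using j0 row[OF j(1)] by auto
        next
          case False
          then have fs: "finite {(j, k). (i, j, k) \<in> f ` Z}" using i0(2) by auto
          obtain j where j: "j \<in> J i" using iJ by (metis ex_in_conv finite.emptyI)
          have "Pair j ` {k. (i, j, k) \<in> f ` Z} \<subseteq> {(j, k). (i, j, k) \<in> f ` Z}" by auto
          then have "finite (Pair j ` {k. (i, j, k) \<in> f ` Z})" using fs finite_subset by blast
          then have "finite {k. (i, j, k) \<in> f ` Z}" by (rule finite_imageD) (simp add: inj_on_def)
          with row[OF j] show False by blast
        qed
      qed
      then show ?thesis using fin_end Z(1) by blast
    qed
  qed
qed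

end


theorem theorem4p2:
  fixes Fam :: "'o set set" and rho :: "'o set \<Rightarrow> 'l set"
  assumes "countable (UNIV :: 'l set)" and "infinite (UNIV :: 'l set)"
    and "countable (UNIV :: 'o set)" and "infinite (UNIV :: 'o set)"
    and "partition_regular Fam rho"
  shows "(katetov_le (ideal_plus BI) rho_ideal Fam rho \<longrightarrow> \<not> P2_minus Fam rho)
       \<and> (S1 Fam rho \<longrightarrow>
            (katetov_le (ideal_plus BI) rho_ideal Fam rho \<longleftrightarrow> \<not> P2_minus Fam rho))
       \<and> (FinBW Fam rho (euclidean :: omega2p1 topology) \<longrightarrow> P2_minus Fam rho)
       \<and> (S2 Fam rho \<longrightarrow>
            (P2_minus Fam rho \<longleftrightarrow> FinBW Fam rho (euclidean :: omega2p1 topology)))"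
proof -
  note p1a = part1a[OF assms(5)]
  note p1b = part1b[OF assms(5) assms(3) assms(1)]
  note p2a = part2a[OF assms(5)]
  note p2b = part2b[OF assms(5)]
  show ?thesis
  proof (intro conjI impI iffI)
    show "\<not> P2_minus Fam rho" if "katetov_le (ideal_plus BI) rho_ideal Fam rho" using p1a that .
    show "\<not> P2_minus Fam rho" if "katetov_le (ideal_plus BI) rho_ideal Fam rho" using p1a that .
    show "katetov_le (ideal_plus BI) rho_ideal Fam rho" if "S1 Fam rho" "\<not> P2_minus Fam rho"
      using p1b that .
    show "P2_minus Fam rho" if "FinBW Fam rho (euclidean :: omega2p1 topology)" using p2a that .
    show "FinBW Fam rho (euclidean :: omega2p1 topology)" if "S2 Fam rho" "P2_minus Fam rho"
      using p2b that .
    show "P2_minus Fam rho" if "FinBW Fam rho (euclidean :: omega2p1 topology)" using p2a that .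
  qed
qed

end
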